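(* Let $m,t,n$ be positive integers with $mt<n\le 2^m$, let $\alpha=(\alpha_1,\dots,\alpha_n)\in\mathbb{F}_{2^m}^n$ be a support tuple, let $p\in\mathbb{F}_2^n$ with $0<\mathrm{wt}(p)\le t$, let $d\in\mathbb{N}$ with $d<t$, and let $\varepsilon\in\mathbb{F}_{2^m}$. Let $\sigma_p(x)=\prod_{i\in I_p}(x-\alpha_i)$ and $\tilde\sigma_p(x)=\varepsilon x^d+\sigma_p(x)$, and let $\tilde p\in\mathbb{F}_2^n$ be defined by $\tilde p_i=1$ if and only if $\tilde\sigma_p(\alpha_i)=0$ (for $i=1,\dots,n$). Then: (a) If $\mathrm{wt}(\tilde p)>\mathrm{wt}(p)$, then $\varepsilon\neq 0$. (b) Either $p=\tilde p$ or $\#(I_p\cap I_{\tilde p})\le 1$. (c) If $\varepsilon\neq 0$, then for $i\in\{1,\dots,n\}$ we have $I_p\cap I_{\tilde p}=\{i\}$ if and only if $i\in I_p$, $\alpha_i=0$, and $d>0$.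
   Context: $\mathbb{F}_{2^m}$ denotes the finite field with $2^m$ elements. A support tuple is a tuple $\alpha=(\alpha_1,\dots,\alpha_n)\in\mathbb{F}_{2^m}^n$ with $\alpha_i\neq\alpha_j$ for $i\neq j$. For $c=(c_1,\dots,c_n)\in\mathbb{F}_2^n$, $I_c=\{i\in\{1,\dots,n\}\mid c_i=1\}$ and $\mathrm{wt}(c)=\#I_c$ is the Hamming weight. The triple $(p,d,\tilde p)$ models a fault injection into the $d$-th coefficient of the error-locator polynomial $\sigma_p$ during decryption, with the fault $\varepsilon$. *)

theory Defs
  imports "HOL-Computational_Algebra.Polynomial"
begin

text \<open>Binary words c in F_2^n are modelled as predicates c :: nat => bool on the
index set {1..n} (c i = True iff c_i = 1), vanishing outside {1..n}.\<close>

definition Iset :: "nat \<Rightarrow> (nat \<Rightarrow> bool) \<Rightarrow> nat set" where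
  "Iset n c = {i \<in> {1..n}. c i}"

definition wt :: "nat \<Rightarrow> (nat \<Rightarrow> bool) \<Rightarrow> nat" where
  "wt n c = card (Iset n c)"

definition support_tuple :: "nat \<Rightarrow> (nat \<Rightarrow> 'a) \<Rightarrow> bool" where
  "support_tuple n \<alpha> \<longleftrightarrow> inj_on \<alpha> {1..n}"

definition sigma :: "(nat \<Rightarrow> 'a::comm_ring_1) \<Rightarrow> nat set \<Rightarrow> 'a poly" where
  "sigma \<alpha> I = (\<Prod>i\<in>I. [:- \<alpha> i, 1:])"

definition sigma_tilde :: "nat \<Rightarrow> (nat \<Rightarrow> 'a::comm_ring_1) \<Rightarrow> (nat \<Rightarrow> bool) \<Rightarrow> nat \<Rightarrow> 'a \<Rightarrow> 'a poly" where
  "sigma_tilde n \<alpha> p d \<epsilon> = monom \<epsilon> d + sigma \<alpha> (Iset n p)"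

definition p_tilde :: "nat \<Rightarrow> (nat \<Rightarrow> 'a::comm_ring_1) \<Rightarrow> (nat \<Rightarrow> bool) \<Rightarrow> nat \<Rightarrow> 'a \<Rightarrow> nat \<Rightarrow> bool" where
  "p_tilde n \<alpha> p d \<epsilon> = (\<lambda>i. i \<in> {1..n} \<and> poly (sigma_tilde n \<alpha> p d \<epsilon>) (\<alpha> i) = 0)"

end

theory Submission
  imports Defs
begin

theorem proposition4p7:
  fixes m t n d :: nat and \<alpha> :: "nat \<Rightarrow> 'a::{field,finite}" and p :: "nat \<Rightarrow> bool" and \<epsilon> :: 'a
  assumes "card (UNIV :: 'a set) = 2 ^ m"
    and "m > 0" and "t > 0" and "n > 0"
    and "m * t < n" and "n \<le> 2 ^ m"
    and "support_tuple n \<alpha>"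
    and "\<forall>i. p i \<longrightarrow> i \<in> {1..n}"
    and "0 < wt n p" and "wt n p \<le> t"
    and "d < t"
  shows "(wt n (p_tilde n \<alpha> p d \<epsilon>) > wt n p \<longrightarrow> \<epsilon> \<noteq> 0)
       \<and> (p = p_tilde n \<alpha> p d \<epsilon> \<or> card (Iset n p \<inter> Iset n (p_tilde n \<alpha> p d \<epsilon>)) \<le> 1)
       \<and> (\<epsilon> \<noteq> 0 \<longrightarrow> (\<forall>i\<in>{1..n}.
            Iset n p \<inter> Iset n (p_tilde n \<alpha> p d \<epsilon>) = {i} \<longleftrightarrow> (i \<in> Iset n p \<and> \<alpha> i = 0 \<and> d > 0)))"
proof -
  define S where "S = Iset n p"
  have Ssub: "S \<subseteq> {1..n}" unfolding S_def Iset_def by auto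
  have fin: "finite S" using Ssub finite_subset by blast
  have inj: "inj_on \<alpha> {1..n}" using assms(7) unfolding support_tuple_def .
  have root: "poly (sigma \<alpha> S) (\<alpha> j) = 0 \<longleftrightarrow> j \<in> S" if j: "j \<in> {1..n}" for j
  proof -
    have "poly (sigma \<alpha> S) (\<alpha> j) = (\<Prod>i\<in>S. \<alpha> j - \<alpha> i)"
      unfolding sigma_def by (simp add: poly_prod)
    also have "\<dots> = 0 \<longleftrightarrow> (\<exists>i\<in>S. \<alpha> j = \<alpha> i)" using fin by simp
    also have "\<dots> \<longleftrightarrow> j \<in> S" using inj j Ssub by (auto dest: inj_onD)
    finally show ?thesis .
  qed
  have pt: "p_tilde n \<alpha> p d \<epsilon> j \<longleftrightarrow> j \<in> {1..n} \<and> \<epsilon> * \<alpha> j ^ d + poly (sigma \<alpha> S) (\<alpha> j) = 0" for j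
    unfolding p_tilde_def sigma_tilde_def S_def by (simp add: poly_monom)
  have pS: "p j \<longleftrightarrow> j \<in> S" for j using assms(8) unfolding S_def Iset_def by auto
  have inter: "S \<inter> Iset n (p_tilde n \<alpha> p d \<epsilon>) = {j\<in>S. \<epsilon> * \<alpha> j ^ d = 0}"
  proof -
    have "j \<in> S \<Longrightarrow> poly (sigma \<alpha> S) (\<alpha> j) = 0" for j using root Ssub by blast
    then have "\<And>j. j \<in> S \<Longrightarrow> (\<epsilon> * \<alpha> j ^ d + poly (sigma \<alpha> S) (\<alpha> j) = 0) = (\<epsilon> * \<alpha> j ^ d = 0)"
      by simp
    then show ?thesis using Ssub unfolding Iset_def pt by (auto simp del: mult_eq_0_iff)
  qed
  have e0: "\<epsilon> = 0 \<Longrightarrow> p_tilde n \<alpha> p d \<epsilon> = p"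
  proof
    fix j assume "\<epsilon> = 0"
    then show "p_tilde n \<alpha> p d \<epsilon> j = p j" unfolding pt pS using root Ssub by auto
  qed
  have A: "wt n (p_tilde n \<alpha> p d \<epsilon>) > wt n p \<longrightarrow> \<epsilon> \<noteq> 0" using e0 by auto
  have C: "\<epsilon> \<noteq> 0 \<Longrightarrow> S \<inter> Iset n (p_tilde n \<alpha> p d \<epsilon>) = {j\<in>S. \<alpha> j = 0 \<and> d > 0}"
    unfolding inter by (auto simp: power_0_left split: if_splits)
  have uniq: "\<lbrakk>j \<in> S; k \<in> S; \<alpha> j = 0; \<alpha> k = 0\<rbrakk> \<Longrightarrow> j = k" for j k
    using inj Ssub by (metis inj_onD subsetD)
  have B: "p = p_tilde n \<alpha> p d \<epsilon> \<or> card (S \<inter> Iset n (p_tilde n \<alpha> p d \<epsilon>)) \<le> 1"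
  proof (cases "\<epsilon> = 0")
    case True then show ?thesis using e0 by simp
  next
    case False
    have "card {j\<in>S. \<alpha> j = 0 \<and> d > 0} \<le> 1"
    proof -
      have "finite {j\<in>S. \<alpha> j = 0 \<and> d > 0}" using fin by simp
      moreover have "\<forall>a1 \<in> {j\<in>S. \<alpha> j = 0 \<and> d > 0}. \<forall>a2 \<in> {j\<in>S. \<alpha> j = 0 \<and> d > 0}. a1 = a2"
        using uniq by blast
      ultimately show ?thesis using card_le_Suc0_iff_eq[of "{j\<in>S. \<alpha> j = 0 \<and> d > 0}"] by simp
    qed
    then show ?thesis using C[OF False] by simp
  qed
  have D: "\<epsilon> \<noteq> 0 \<longrightarrow> (\<forall>i\<in>{1..n}. S \<inter> Iset n (p_tilde n \<alpha> p d \<epsilon>) = {i} \<longleftrightarrow> (i \<in> S \<and> \<alpha> i = 0 \<and> d > 0))"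
  proof (intro impI ballI)
    fix i assume e: "\<epsilon> \<noteq> 0" and i: "i \<in> {1..n}"
    show "S \<inter> Iset n (p_tilde n \<alpha> p d \<epsilon>) = {i} \<longleftrightarrow> (i \<in> S \<and> \<alpha> i = 0 \<and> d > 0)"
      unfolding C[OF e] using uniq by blast
  qed
  show ?thesis using A B D unfolding S_def by blast
qed

end
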